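(* Let $\pi$ be uniform on $\mathrm{PF}_n$ and $f$ uniform on $\widetilde{\mathcal F}_n$. Then the species $\mu(\pi)$ and $\mu(f)$ have the same distribution. Consequently the number of inversions $\#\{(i,j):i<j,\ g(i)>g(j)\}$ has the same distribution for $g=\pi$ and $g=f$.
   Context: A parking function of length $n$ is a sequence $(\pi_1,\dots,\pi_n)$ with $1\le\pi_i\le n$ such that $\#\{t:\pi_t\le i\}\ge i$ for all $1\le i\le n$; $\mathrm{PF}_n$ denotes the set of these. $\widetilde{\mathcal F}_n$ is the set of all functions $g:[n]\to[n+1]$. For $g\in\widetilde{\mathcal F}_n$ and $0\le i\le n$, let $\mu_i(g)$ be the number of values $v\in[n+1]$ with $\#\{t:g(t)=v\}=i$; the species of $g$ is $\mu(g)=(\mu_0(g),\mu_1(g),\dots,\mu_n(g))$. *)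

theory Defs
  imports "HOL-Probability.Probability"
begin

definition PF :: "nat \<Rightarrow> (nat \<Rightarrow> nat) set" where
  "PF n = {p \<in> {1..n} \<rightarrow>\<^sub>E {1..n}. \<forall>i\<in>{1..n}. card {t\<in>{1..n}. p t \<le> i} \<ge> i}"

definition Ftilde :: "nat \<Rightarrow> (nat \<Rightarrow> nat) set" where
  "Ftilde n = {1..n} \<rightarrow>\<^sub>E {1..n+1}"

definition mu :: "nat \<Rightarrow> (nat \<Rightarrow> nat) \<Rightarrow> nat \<Rightarrow> nat" where
  "mu n g i = card {v\<in>{1..n+1}. card {t\<in>{1..n}. g t = v} = i}"

definition species :: "nat \<Rightarrow> (nat \<Rightarrow> nat) \<Rightarrow> nat list" where
  "species n g = map (mu n g) [0..<n+1]"

definition inversions :: "nat \<Rightarrow> (nat \<Rightarrow> nat) \<Rightarrow> nat" where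
  "inversions n g = card {(i,j). i\<in>{1..n} \<and> j\<in>{1..n} \<and> i < j \<and> g i > g j}"

end

theory Submission
  imports Defs
begin

definition idx :: "nat list \<Rightarrow> nat \<Rightarrow> nat" where
  "idx xs t = (THE i. i < length xs \<and> xs ! i = t)"

lemma idx_props: assumes "distinct xs" "t \<in> set xs"
  shows "idx xs t < length xs" "xs ! idx xs t = t"
proof -
  have "\<exists>!i. i < length xs \<and> xs ! i = t" using distinct_Ex1[OF assms] .
  then have "idx xs t < length xs \<and> xs ! idx xs t = t" unfolding idx_def by (rule theI')
  then show "idx xs t < length xs" "xs ! idx xs t = t" by auto
qed

lemma idx_nth: assumes "distinct xs" "i < length xs" shows "idx xs (xs ! i) = i"
proof -
  have "\<exists>!j. j < length xs \<and> xs ! j = xs ! i" using distinct_Ex1[OF assms(1)] assms by auto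
  then show ?thesis unfolding idx_def using assms by (intro the1_equality) auto
qed

definition rv :: "nat set \<Rightarrow> nat \<Rightarrow> nat" where
  "rv P t = (let xs = sorted_list_of_set P in xs ! (length xs - 1 - idx xs t))"

lemma rv_props:
  assumes "finite P" "t \<in> P"
  shows "rv P t \<in> P" "rv P (rv P t) = t"
proof -
  let ?xs = "sorted_list_of_set P"
  have d: "distinct ?xs" and s: "set ?xs = P" using assms by auto
  have i: "idx ?xs t < length ?xs" using idx_props(1)[OF d, of t] assms s by simp
  have j: "length ?xs - 1 - idx ?xs t < length ?xs" using i by linarith
  show "rv P t \<in> P" unfolding rv_def Let_def using j s nth_mem by blast
  have "idx ?xs (?xs ! (length ?xs - 1 - idx ?xs t)) = length ?xs - 1 - idx ?xs t"
    using d j idx_nth by blast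
  moreover have "?xs ! idx ?xs t = t" using idx_props(2)[OF d] assms s by simp
  ultimately show "rv P (rv P t) = t" unfolding rv_def Let_def using i
    by (simp add: Suc_leI diff_diff_cancel)
qed

lemma rv_mono:
  assumes "finite P" "t \<in> P" "s \<in> P" "t < s"
  shows "rv P s < rv P t"
proof -
  let ?xs = "sorted_list_of_set P"
  have d: "distinct ?xs" and s: "set ?xs = P" and so: "sorted_wrt (<) ?xs" using assms by auto
  have i: "idx ?xs t < length ?xs" "idx ?xs s < length ?xs" using idx_props(1)[OF d] assms s by auto
  have "idx ?xs t < idx ?xs s"
  proof (rule ccontr)
    assume "\<not> ?thesis"
    then have "idx ?xs s \<le> idx ?xs t" by simp
    then have "?xs ! idx ?xs s \<le> ?xs ! idx ?xs t"
      using so i by (metis le_eq_less_or_eq order.strict_implies_order sorted_wrt_nth_less)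
    then show False using assms s idx_props(2)[OF d] by simp
  qed
  then have "length ?xs - 1 - idx ?xs s < length ?xs - 1 - idx ?xs t" "length ?xs - 1 - idx ?xs t < length ?xs"
    using i by auto
  then show ?thesis unfolding rv_def Let_def using sorted_wrt_nth_less[OF so] by blast
qed

definition tr :: "nat \<Rightarrow> nat \<Rightarrow> nat" where
  "tr v w = (if w = v then Suc v else if w = Suc v then v else w)"
definition Ps :: "nat \<Rightarrow> nat \<Rightarrow> (nat\<Rightarrow>nat) \<Rightarrow> nat set" where
  "Ps n v g = {t\<in>{1..n}. g t = v \<or> g t = Suc v}"
definition Sw :: "nat \<Rightarrow> nat \<Rightarrow> (nat\<Rightarrow>nat) \<Rightarrow> (nat\<Rightarrow>nat)" where
  "Sw n v g = (\<lambda>t. if t \<in> {1..n} then (if t \<in> Ps n v g then tr v (g (rv (Ps n v g) t)) else g t) else undefined)"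
definition cnt :: "nat \<Rightarrow> (nat\<Rightarrow>nat) \<Rightarrow> nat \<Rightarrow> nat" where
  "cnt n g v = card {t\<in>{1..n}. g t = v}"
definition invs :: "nat \<Rightarrow> (nat\<Rightarrow>nat) \<Rightarrow> (nat \<times> nat) set" where
  "invs n g = {(i,j). i\<in>{1..n} \<and> j\<in>{1..n} \<and> i < j \<and> g i > g j}"

lemma fin_Ps: "finite (Ps n v g)" unfolding Ps_def by auto

lemma tr_tr[simp]: "tr v (tr v w) = w" unfolding tr_def by auto

lemma Ps_mem: "t \<in> Ps n v g \<longleftrightarrow> t \<in> {1..n} \<and> (g t = v \<or> g t = Suc v)"
  unfolding Ps_def by blast

lemma Sw_in: assumes "t \<in> Ps n v g" shows "Sw n v g t = tr v (g (rv (Ps n v g) t))"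
proof -
  have "(t \<in> {1..n}) = True" using assms by (simp add: Ps_mem)
  moreover have "(t \<in> Ps n v g) = True" using assms by simp
  ultimately show ?thesis unfolding Sw_def by (simp only: if_True)
qed

lemma Sw_out: "t \<notin> Ps n v g \<Longrightarrow> t \<in> {1..n} \<Longrightarrow> Sw n v g t = g t"
  unfolding Sw_def by auto

lemma Sw_out2: assumes "t \<notin> {1..n}" shows "Sw n v g t = undefined"
proof -
  have "(t \<in> {1..n}) = False" using assms by simp
  then show ?thesis unfolding Sw_def by (simp only: if_False)
qed

lemma rv_in: "t \<in> Ps n v g \<Longrightarrow> rv (Ps n v g) t \<in> Ps n v g"
  by (rule rv_props(1)[OF fin_Ps])
lemma rv_rv: "t \<in> Ps n v g \<Longrightarrow> rv (Ps n v g) (rv (Ps n v g) t) = t"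
  by (rule rv_props(2)[OF fin_Ps])

lemma tr_vals: "x = v \<or> x = Suc v \<Longrightarrow> tr v x = v \<or> tr v x = Suc v"
  unfolding tr_def by auto

lemma Ps_Sw: "Ps n v (Sw n v g) = Ps n v g"
proof (rule set_eqI)
  fix t
  let ?P = "Ps n v g"
  show "t \<in> Ps n v (Sw n v g) \<longleftrightarrow> t \<in> ?P"
  proof (cases "t \<in> ?P")
    case True
    then have "rv ?P t \<in> ?P" by (rule rv_in)
    then have "g (rv ?P t) = v \<or> g (rv ?P t) = Suc v" by (simp add: Ps_mem)
    then have "Sw n v g t = v \<or> Sw n v g t = Suc v" unfolding Sw_in[OF True] by (rule tr_vals)
    moreover have "t \<in> {1..n}" using True by (simp add: Ps_mem)
    ultimately show ?thesis using True by (simp add: Ps_mem)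
  next
    case False
    show ?thesis
    proof (cases "t \<in> {1..n}")
      case True
      then show ?thesis using False Sw_out[OF False True] by (simp add: Ps_mem)
    next
      case False
      then show ?thesis unfolding Ps_mem by auto
    qed
  qed
qed

lemma Sw_Sw: assumes "g \<in> Ftilde n" shows "Sw n v (Sw n v g) = g"
proof
  fix t
  let ?P = "Ps n v g"
  show "Sw n v (Sw n v g) t = g t"
  proof (cases "t \<in> ?P")
    case True
    then have r: "rv ?P t \<in> ?P" "rv ?P (rv ?P t) = t" using rv_in rv_rv by auto
    have "Sw n v (Sw n v g) t = tr v (Sw n v g (rv ?P t))"
      using Sw_in[of t n v "Sw n v g"] True unfolding Ps_Sw by simp
    also have "\<dots> = tr v (tr v (g t))" using Sw_in[OF r(1)] r(2) by simp
    finally show ?thesis by simp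
  next
    case False
    show ?thesis
    proof (cases "t \<in> {1..n}")
      case True
      have F2: "t \<notin> Ps n v (Sw n v g)" using False unfolding Ps_Sw .
      show ?thesis using Sw_out[OF F2 True] Sw_out[OF False True] by simp
    next
      case False
      then show ?thesis using Sw_out2[OF False] assms unfolding Ftilde_def
        by (simp add: PiE_def extensional_def)
    qed
  qed
qed

lemma Ft_val: "g \<in> Ftilde n \<Longrightarrow> t \<in> {1..n} \<Longrightarrow> g t \<in> {1..n+1}"
  unfolding Ftilde_def by auto

lemma Sw_Ft: assumes "g \<in> Ftilde n" "v \<le> n" "1 \<le> v" shows "Sw n v g \<in> Ftilde n"
proof -
  let ?P = "Ps n v g"
  have "Sw n v g t \<in> {1..n+1}" if t: "t \<in> {1..n}" for t
  proof (cases "t \<in> ?P")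
    case True
    then have "rv ?P t \<in> ?P" by (rule rv_in)
    then have "g (rv ?P t) = v \<or> g (rv ?P t) = Suc v" by (simp add: Ps_mem)
    then have "Sw n v g t = v \<or> Sw n v g t = Suc v" unfolding Sw_in[OF True] by (rule tr_vals)
    then show ?thesis using assms by auto
  next
    case False
    then show ?thesis using Sw_out[OF False t] Ft_val[OF assms(1) t] by simp
  qed
  moreover have "Sw n v g t = undefined" if "t \<notin> {1..n}" for t using Sw_out2[OF that] .
  ultimately show ?thesis unfolding Ftilde_def by (auto simp: PiE_def extensional_def)
qed

lemma Sw_vals: "t \<in> Ps n v g \<Longrightarrow> Sw n v g t = v \<or> Sw n v g t = Suc v"
proof -
  assume T: "t \<in> Ps n v g"
  then have "rv (Ps n v g) t \<in> Ps n v g" by (rule rv_in)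
  then have "g (rv (Ps n v g) t) = v \<or> g (rv (Ps n v g) t) = Suc v" by (simp add: Ps_mem)
  then show ?thesis unfolding Sw_in[OF T] by (rule tr_vals)
qed

lemma tr_eq: "(tr v x = u) \<longleftrightarrow> (x = tr v u)" by (metis tr_tr)

lemma cnt_Sw: "cnt n (Sw n v g) u = cnt n g (tr v u)"
proof -
  let ?P = "Ps n v g"
  show ?thesis
  proof (cases "u = v \<or> u = Suc v")
    case False
    then have tu: "tr v u = u" unfolding tr_def by auto
    have "{t\<in>{1..n}. Sw n v g t = u} = {t\<in>{1..n}. g t = u}"
    proof (rule set_eqI)
      fix t
      show "t \<in> {t\<in>{1..n}. Sw n v g t = u} \<longleftrightarrow> t \<in> {t\<in>{1..n}. g t = u}"
      proof (cases "t \<in> ?P")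
        case True
        then have "g t = v \<or> g t = Suc v" by (simp add: Ps_mem)
        then show ?thesis using Sw_vals[OF True] False by auto
      next
        case nP: False
        show ?thesis
        proof (cases "t \<in> {1..n}")
          case True
          then show ?thesis using Sw_out[OF nP True] by simp
        qed auto
      qed
    qed
    then show ?thesis unfolding cnt_def tu by simp
  next
    case True
    have eq: "{t\<in>{1..n}. Sw n v g t = u} = rv ?P ` {t\<in>{1..n}. g t = tr v u}"
    proof (rule set_eqI)
      fix t
      show "t \<in> {t\<in>{1..n}. Sw n v g t = u} \<longleftrightarrow> t \<in> rv ?P ` {t\<in>{1..n}. g t = tr v u}"
      proof
        assume A: "t \<in> {t\<in>{1..n}. Sw n v g t = u}"
        have tP: "t \<in> ?P"
        proof (rule ccontr)
          assume nP: "t \<notin> ?P"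
          have "t \<in> {1..n}" using A by simp
          then have "g t = u" using A Sw_out[OF nP] by simp
          then show False using nP True \<open>t \<in> {1..n}\<close> by (auto simp: Ps_mem)
        qed
        have r: "rv ?P t \<in> ?P" "rv ?P (rv ?P t) = t" using rv_in[OF tP] rv_rv[OF tP] by auto
        have "g (rv ?P t) = tr v u" using A Sw_in[OF tP] tr_eq by simp
        then have "rv ?P t \<in> {t\<in>{1..n}. g t = tr v u}" using r(1) by (simp add: Ps_mem)
        then show "t \<in> rv ?P ` {t\<in>{1..n}. g t = tr v u}" using r(2) by (metis image_eqI)
      next
        assume "t \<in> rv ?P ` {t\<in>{1..n}. g t = tr v u}"
        then obtain s where s: "s \<in> {1..n}" "g s = tr v u" "t = rv ?P s" by auto
        have sP: "s \<in> ?P" using s True unfolding tr_def by (auto simp: Ps_mem)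
        have tP: "t \<in> ?P" using rv_in[OF sP] s(3) by simp
        have "Sw n v g t = tr v (g s)" using Sw_in[OF tP] s(3) rv_rv[OF sP] by simp
        then show "t \<in> {t\<in>{1..n}. Sw n v g t = u}" using s(2) tP by (simp add: Ps_mem)
      qed
    qed
    have sub: "{t\<in>{1..n}. g t = tr v u} \<subseteq> ?P" using True unfolding tr_def by (auto simp: Ps_mem)
    have "inj_on (rv ?P) {t\<in>{1..n}. g t = tr v u}"
    proof (rule inj_onI)
      fix x y assume "x \<in> {t\<in>{1..n}. g t = tr v u}" "y \<in> {t\<in>{1..n}. g t = tr v u}" "rv ?P x = rv ?P y"
      then show "x = y" using sub rv_rv by (metis subsetD)
    qed
    then show ?thesis unfolding cnt_def eq by (simp add: card_image)
  qed
qed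

definition Fm :: "nat set \<Rightarrow> nat \<times> nat \<Rightarrow> nat \<times> nat" where
  "Fm P p = (if fst p \<in> P \<and> snd p \<in> P then (rv P (snd p), rv P (fst p)) else p)"

lemma Fm_invs: assumes "p \<in> invs n g" shows "Fm (Ps n v g) p \<in> invs n (Sw n v g)"
proof -
  let ?P = "Ps n v g"
  obtain i j where p: "p = (i,j)" by force
  have ij: "i \<in> {1..n}" "j \<in> {1..n}" "i < j" "g i > g j" using assms p by (auto simp: invs_def)
  show ?thesis
  proof (cases "i \<in> ?P")
    case iP: True
    show ?thesis
    proof (cases "j \<in> ?P")
      case jP: True
      have gi: "g i = Suc v" and gj: "g j = v" using iP jP ij(4) by (auto simp: Ps_mem)
      have ri: "rv ?P i \<in> ?P" "rv ?P (rv ?P i) = i" using rv_in[OF iP] rv_rv[OF iP] by auto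
      have rj: "rv ?P j \<in> ?P" "rv ?P (rv ?P j) = j" using rv_in[OF jP] rv_rv[OF jP] by auto
      have lt: "rv ?P j < rv ?P i" using rv_mono[OF fin_Ps iP jP ij(3)] .
      have s1: "Sw n v g (rv ?P j) = Suc v" using Sw_in[OF rj(1)] rj(2) gj by (simp add: tr_def)
      have s2: "Sw n v g (rv ?P i) = v" using Sw_in[OF ri(1)] ri(2) gi by (simp add: tr_def)
      have "rv ?P j \<in> {1..n}" "rv ?P i \<in> {1..n}" using ri(1) rj(1) by (auto simp: Ps_mem)
      then show ?thesis using p iP jP lt s1 s2 by (simp add: Fm_def invs_def)
    next
      case jP: False
      have "g j < v" using iP jP ij by (auto simp: Ps_mem)
      moreover have "Sw n v g j = g j" using Sw_out[OF jP ij(2)] .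
      moreover have "Sw n v g i \<ge> v" using Sw_vals[OF iP] by auto
      ultimately show ?thesis using p iP jP ij by (simp add: Fm_def invs_def)
    qed
  next
    case iP: False
    show ?thesis
    proof (cases "j \<in> ?P")
      case jP: True
      have "g i > Suc v" using iP jP ij by (auto simp: Ps_mem)
      moreover have "Sw n v g i = g i" using Sw_out[OF iP ij(1)] .
      moreover have "Sw n v g j \<le> Suc v" using Sw_vals[OF jP] by auto
      ultimately show ?thesis using p iP jP ij by (simp add: Fm_def invs_def)
    next
      case jP: False
      show ?thesis using p iP jP ij Sw_out[OF iP ij(1)] Sw_out[OF jP ij(2)] by (simp add: Fm_def invs_def)
    qed
  qed
qed

lemma Fm_Fm: "Fm (Ps n v g) (Fm (Ps n v g) p) = p"
proof -
  let ?P = "Ps n v g"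
  obtain i j where p: "p = (i,j)" by force
  show ?thesis
  proof (cases "i \<in> ?P \<and> j \<in> ?P")
    case True
    then show ?thesis using p rv_in rv_rv by (simp add: Fm_def)
  next
    case False
    then have "Fm ?P p = p" using p by (auto simp add: Fm_def)
    then show ?thesis by simp
  qed
qed

lemma inv_Sw: assumes "g \<in> Ftilde n" shows "inversions n (Sw n v g) = inversions n g"
proof -
  have e: "inversions n h = card (invs n h)" for h unfolding inversions_def invs_def by simp
  let ?F = "Fm (Ps n v g)"
  have "bij_betw ?F (invs n g) (invs n (Sw n v g))"
  proof (rule bij_betw_byWitness[where f' = ?F])
    show "\<forall>a\<in>invs n g. ?F (?F a) = a" using Fm_Fm by simp
    show "\<forall>a\<in>invs n (Sw n v g). ?F (?F a) = a" using Fm_Fm by simp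
    show "?F ` invs n g \<subseteq> invs n (Sw n v g)" using Fm_invs by auto
    have "Fm (Ps n v (Sw n v g)) ` invs n (Sw n v g) \<subseteq> invs n (Sw n v (Sw n v g))"
      using Fm_invs by auto
    then show "?F ` invs n (Sw n v g) \<subseteq> invs n g" unfolding Ps_Sw Sw_Sw[OF assms] .
  qed
  then show ?thesis unfolding e by (metis bij_betw_same_card)
qed

definition Kc :: "nat \<Rightarrow> (nat \<Rightarrow> bool) \<Rightarrow> (nat \<Rightarrow> nat) \<Rightarrow> nat" where
  "Kc n Q c = card {g\<in>Ftilde n. cnt n g = c \<and> Q (inversions n g)}"

lemma cnt_Sw_fun: "cnt n (Sw n v g) = cnt n g \<circ> tr v"
  using cnt_Sw by (auto simp: fun_eq_iff)

lemma Kc_swap: assumes "1 \<le> v" "v \<le> n" shows "Kc n Q (c \<circ> tr v) = Kc n Q c"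
proof -
  let ?A = "{g\<in>Ftilde n. cnt n g = c \<and> Q (inversions n g)}"
  let ?B = "{g\<in>Ftilde n. cnt n g = c \<circ> tr v \<and> Q (inversions n g)}"
  have cc: "c \<circ> tr v \<circ> tr v = c" by (simp add: fun_eq_iff)
  have "bij_betw (Sw n v) ?A ?B"
  proof (rule bij_betw_byWitness[where f' = "Sw n v"])
    show "\<forall>a\<in>?A. Sw n v (Sw n v a) = a"
    proof
      fix a assume "a \<in> ?A" then have "a \<in> Ftilde n" by blast
      then show "Sw n v (Sw n v a) = a" by (rule Sw_Sw)
    qed
    show "\<forall>a\<in>?B. Sw n v (Sw n v a) = a"
    proof
      fix a assume "a \<in> ?B" then have "a \<in> Ftilde n" by blast
      then show "Sw n v (Sw n v a) = a" by (rule Sw_Sw)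
    qed
    show "Sw n v ` ?A \<subseteq> ?B"
    proof (rule image_subsetI)
      fix g assume g: "g \<in> ?A"
      have g1: "g \<in> Ftilde n" "cnt n g = c" "Q (inversions n g)" using g by blast+
      have "Sw n v g \<in> Ftilde n" by (rule Sw_Ft[OF g1(1) assms(2,1)])
      moreover have "cnt n (Sw n v g) = c \<circ> tr v" using cnt_Sw_fun[of n v g] g1(2) by simp
      moreover have "Q (inversions n (Sw n v g))" using inv_Sw[OF g1(1)] g1(3) by simp
      ultimately show "Sw n v g \<in> ?B" by blast
    qed
    show "Sw n v ` ?B \<subseteq> ?A"
    proof (rule image_subsetI)
      fix g assume g: "g \<in> ?B"
      have g1: "g \<in> Ftilde n" "cnt n g = c \<circ> tr v" "Q (inversions n g)" using g by blast+
      have "Sw n v g \<in> Ftilde n" by (rule Sw_Ft[OF g1(1) assms(2,1)])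
      moreover have "cnt n (Sw n v g) = c" using cnt_Sw_fun[of n v g] g1(2) cc by simp
      moreover have "Q (inversions n (Sw n v g))" using inv_Sw[OF g1(1)] g1(3) by simp
      ultimately show "Sw n v g \<in> ?A" by blast
    qed
  qed
  then have "card ?A = card ?B" by (rule bij_betw_same_card)
  then show ?thesis unfolding Kc_def by simp
qed

fun sig :: "nat \<Rightarrow> nat \<Rightarrow> nat" where
  "sig 0 = id"
| "sig (Suc m) = (if m = 0 then id else sig m \<circ> tr m)"

lemma sig_formula: "sig (Suc m) w = (if w = Suc m then 1 else if 1 \<le> w \<and> w < Suc m then w+1 else w)"
proof (induction m arbitrary: w)
  case 0
  then show ?case by simp
next
  case (Suc m)
  show ?case using Suc[of "tr (Suc m) w"] by (simp add: tr_def)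
qed

lemma Kc_sig: "m \<le> Suc n \<Longrightarrow> Kc n Q (c \<circ> sig m) = Kc n Q c"
proof (induction m)
  case 0
  then show ?case by simp
next
  case (Suc m)
  show ?case
  proof (cases "m = 0")
    case True
    then show ?thesis by simp
  next
    case False
    have "c \<circ> sig (Suc m) = (c \<circ> sig m) \<circ> tr m" using False by (simp add: comp_assoc)
    then have "Kc n Q (c \<circ> sig (Suc m)) = Kc n Q (c \<circ> sig m)"
      using Kc_swap[of m n Q "c \<circ> sig m"] False Suc.prems by simp
    moreover have "Kc n Q (c \<circ> sig m) = Kc n Q c" using Suc.IH Suc.prems by (simp add: comp_def)
    ultimately show ?thesis by (rule trans)
  qed
qed

definition ls :: "nat \<Rightarrow> nat \<Rightarrow> nat" where "ls n = sig (Suc n)"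

lemma ls_formula: "ls n w = (if w = Suc n then 1 else if 1 \<le> w \<and> w < Suc n then w+1 else w)"
  unfolding ls_def by (rule sig_formula)

lemma ls_pow: "(ls n ^^ a) w = (if 1 \<le> w \<and> w \<le> Suc n then ((w - 1 + a) mod Suc n) + 1 else w)"
proof (induction a)
  case 0
  show ?case
  proof (cases "1 \<le> w \<and> w \<le> Suc n")
    case True
    then have "w - 1 < Suc n" by linarith
    then have "(w - 1 + 0) mod Suc n = w - 1" by simp
    then show ?thesis using True by simp
  qed auto
next
  case (Suc a)
  show ?case
  proof (cases "1 \<le> w \<and> w \<le> Suc n")
    case True
    let ?r = "(w - 1 + a) mod Suc n"
    have r: "?r < Suc n" by simp
    have "(ls n ^^ Suc a) w = ls n (?r + 1)" using Suc True by simp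
    also have "\<dots> = (if Suc ?r = Suc n then 1 else ?r + 2)"
    proof (cases "?r = n")
      case True
      then show ?thesis unfolding ls_formula by simp
    next
      case False
      then have "?r < n" using r by linarith
      then show ?thesis unfolding ls_formula by simp
    qed
    also have "\<dots> = ((w - 1 + Suc a) mod Suc n) + 1"
      using mod_Suc[of "w - 1 + a" "Suc n"] by auto
    finally show ?thesis using True by simp
  next
    case False
    then have "(ls n ^^ a) w = w" using Suc.IH by auto
    then have "(ls n ^^ Suc a) w = ls n w" by simp
    also have "\<dots> = w" using False unfolding ls_formula by auto
    finally show ?thesis using False by auto
  qed
qed

lemma Kc_ls1: "Kc n Q (d \<circ> ls n) = Kc n Q d"
  unfolding ls_def by (rule Kc_sig) simp

lemma Kc_ls: "Kc n Q (c \<circ> (ls n ^^ a)) = Kc n Q c"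
proof (induction a)
  case 0
  then show ?case by simp
next
  case (Suc a)
  have "Kc n Q (c \<circ> (ls n ^^ Suc a)) = Kc n Q ((c \<circ> (ls n ^^ a)) \<circ> ls n)"
    by (simp only: funpow_Suc_right comp_assoc)
  also have "\<dots> = Kc n Q (c \<circ> (ls n ^^ a))" by (rule Kc_ls1)
  also have "\<dots> = Kc n Q c" by (rule Suc.IH)
  finally show ?case .
qed

lemma Ft_ge1: "g \<in> Ftilde n \<Longrightarrow> t \<in> {1..n} \<Longrightarrow> 1 \<le> g t \<and> g t \<le> Suc n"
  using Ft_val by fastforce

lemma cnt_le: assumes "g \<in> Ftilde n"
  shows "card {t\<in>{1..n}. g t \<le> i} = (\<Sum>j<i. cnt n g (Suc j))"
proof (induction i)
  case 0
  have "{t\<in>{1..n}. g t \<le> 0} = {}" using Ft_ge1[OF assms] by fastforce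
  then show ?case by simp
next
  case (Suc i)
  have "{t\<in>{1..n}. g t \<le> Suc i} = {t\<in>{1..n}. g t \<le> i} \<union> {t\<in>{1..n}. g t = Suc i}" by auto
  moreover have "{t\<in>{1..n}. g t \<le> i} \<inter> {t\<in>{1..n}. g t = Suc i} = {}" by auto
  ultimately have "card {t\<in>{1..n}. g t \<le> Suc i} = card {t\<in>{1..n}. g t \<le> i} + card {t\<in>{1..n}. g t = Suc i}"
    by (simp add: card_Un_disjoint)
  then show ?case using Suc by (simp add: cnt_def)
qed

lemma sum_cnt: assumes "g \<in> Ftilde n" shows "(\<Sum>j<Suc n. cnt n g (Suc j)) = n"
proof -
  have "{t\<in>{1..n}. g t \<le> Suc n} = {1..n}" using Ft_ge1[OF assms] by auto
  then show ?thesis using cnt_le[OF assms, of "Suc n"] by simp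
qed

definition PFv :: "nat \<Rightarrow> (nat \<Rightarrow> nat) \<Rightarrow> bool" where
  "PFv n c = (\<forall>i\<in>{1..n}. i \<le> (\<Sum>j<i. c (Suc j)))"

lemma PF_char: "PF n = {g\<in>Ftilde n. PFv n (cnt n g)}"
proof (rule set_eqI)
  fix g
  show "g \<in> PF n \<longleftrightarrow> g \<in> {g\<in>Ftilde n. PFv n (cnt n g)}"
  proof
    assume g: "g \<in> PF n"
    then have gF: "g \<in> Ftilde n" unfolding PF_def Ftilde_def by (auto simp: PiE_iff)
    have "\<forall>i\<in>{1..n}. card {t\<in>{1..n}. g t \<le> i} \<ge> i" using g unfolding PF_def by blast
    then show "g \<in> {g\<in>Ftilde n. PFv n (cnt n g)}" using gF cnt_le[OF gF] unfolding PFv_def by simp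
  next
    assume "g \<in> {g\<in>Ftilde n. PFv n (cnt n g)}"
    then have gF: "g \<in> Ftilde n" and pv: "PFv n (cnt n g)" by auto
    have c: "\<forall>i\<in>{1..n}. card {t\<in>{1..n}. g t \<le> i} \<ge> i" using pv cnt_le[OF gF] unfolding PFv_def by simp
    have "g t \<le> n" if t: "t \<in> {1..n}" for t
    proof -
      have nn: "n \<in> {1..n}" using t by auto
      have "card {t\<in>{1..n}. g t \<le> n} \<ge> card {1..n}" using c nn by simp
      moreover have "{t\<in>{1..n}. g t \<le> n} \<subseteq> {1..n}" by auto
      ultimately have "{t\<in>{1..n}. g t \<le> n} = {1..n}"
        by (meson card_seteq finite_atLeastAtMost)
      then show ?thesis using t by blast
    qed
    then have "g \<in> {1..n} \<rightarrow>\<^sub>E {1..n}" using gF Ft_ge1[OF gF] unfolding Ftilde_def by (auto simp: PiE_iff)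
    then show "g \<in> PF n" using c unfolding PF_def by blast
  qed
qed

lemma cycle_abstract:
  fixes H :: "nat \<Rightarrow> int"
  assumes per: "\<And>x. H (x + Suc n) = H x - 1"
  shows "\<exists>!a. a \<le> n \<and> (\<forall>i\<in>{1..n}. H a \<le> H (a + i))"
proof -
  let ?good = "\<lambda>a. a \<le> n \<and> (\<forall>i\<in>{1..n}. H a \<le> H (a + i))"
  define M where "M = Min (H ` {0..n})"
  have Mle: "M \<le> H x" if "x \<le> n" for x unfolding M_def using that by simp
  have "\<exists>x. x \<le> n \<and> H x = M" unfolding M_def
    using Min_in[of "H ` {0..n}"] by fastforce
  define a where "a = (LEAST x. x \<le> n \<and> H x = M)"
  have a: "a \<le> n" "H a = M" unfolding a_def using LeastI_ex[OF \<open>\<exists>x. x \<le> n \<and> H x = M\<close>] by auto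
  have amin: "H z > M" if "z < a" for z
  proof -
    have "\<not> (z \<le> n \<and> H z = M)" using not_less_Least[OF that[unfolded a_def]] unfolding a_def .
    then show ?thesis using Mle[of z] that a(1) by auto
  qed
  have ga: "?good a"
  proof (intro conjI ballI)
    show "a \<le> n" by (rule a(1))
    fix i assume i: "i \<in> {1..n}"
    show "H a \<le> H (a + i)"
    proof (cases "a + i \<le> n")
      case True then show ?thesis using Mle a by simp
    next
      case False
      define z where "z = a + i - Suc n"
      have z: "z < a" "a + i = z + Suc n" using False i unfolding z_def by auto
      have "H (a + i) = H z - 1" using per[of z] z(2) by simp
      then show ?thesis using amin[OF z(1)] a(2) by simp
    qed
  qed
  have uniq: "b = a" if gb: "?good b" for b
  proof (rule ccontr)
    have key: False if g1: "?good x" and g2: "?good y" and xy: "x < y" for x y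
    proof -
      have "y - x \<in> {1..n}" using g2 xy by auto
      then have "H x \<le> H (x + (y - x))" using g1 by blast
      then have h1: "H x \<le> H y" using xy by simp
      have "y + (x + Suc n - y) = x + Suc n" using xy g2 by auto
      moreover have "x + Suc n - y \<in> {1..n}" using xy g2 by auto
      ultimately have "H y \<le> H (x + Suc n)" using g2 by metis
      then show False using per[of x] h1 by simp
    qed
    assume "b \<noteq> a"
    then show False using key[OF gb ga] key[OF ga gb] by (cases "b < a") auto
  qed
  show ?thesis using ga uniq by blast
qed

definition cc :: "nat \<Rightarrow> (nat \<Rightarrow> nat) \<Rightarrow> nat \<Rightarrow> nat" where
  "cc n c u = c ((u mod Suc n) + 1)"
definition GG :: "nat \<Rightarrow> (nat \<Rightarrow> nat) \<Rightarrow> nat \<Rightarrow> nat" where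
  "GG n c x = (\<Sum>u<x. cc n c u)"

lemma GG_add: "GG n c (a + i) = GG n c a + (\<Sum>j<i. cc n c (a + j))"
proof (induction i)
  case 0 then show ?case by (simp add: GG_def)
next
  case (Suc i)
  have "GG n c (a + Suc i) = GG n c (a + i) + cc n c (a + i)" by (simp add: GG_def)
  then show ?case using Suc by simp
qed

lemma sum_rot: assumes "i \<le> n"
  shows "(\<Sum>j<i. (c \<circ> (ls n ^^ a)) (Suc j)) = (\<Sum>j<i. cc n c (a + j))"
proof (rule sum.cong)
  fix j assume "j \<in> {..<i}"
  then have "1 \<le> Suc j \<and> Suc j \<le> Suc n" using assms by auto
  then have "(ls n ^^ a) (Suc j) = ((a + j) mod Suc n) + 1" unfolding ls_pow by (simp add: add.commute)
  then show "(c \<circ> (ls n ^^ a)) (Suc j) = cc n c (a + j)" by (simp add: cc_def)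
qed simp

lemma GG_per: assumes "g \<in> Ftilde n"
  shows "GG n (cnt n g) (x + Suc n) = GG n (cnt n g) x + n"
proof (induction x)
  case 0
  have "GG n (cnt n g) (Suc n) = (\<Sum>u<Suc n. cnt n g (Suc u))"
    unfolding GG_def cc_def by (rule sum.cong) auto
  then show ?case using sum_cnt[OF assms] by (simp add: GG_def)
next
  case (Suc x)
  have "GG n (cnt n g) (Suc x + Suc n) = GG n (cnt n g) (x + Suc n) + cc n (cnt n g) (x + Suc n)"
    by (simp add: GG_def)
  moreover have "cc n (cnt n g) (x + Suc n) = cc n (cnt n g) x" unfolding cc_def by (simp only: mod_add_self2)
  ultimately show ?case using Suc by (simp add: GG_def)
qed

lemma cycle_cnt: assumes "g \<in> Ftilde n"
  shows "\<exists>!a. a \<le> n \<and> PFv n (cnt n g \<circ> (ls n ^^ a))"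
proof -
  let ?c = "cnt n g"
  define H where "H x = int (GG n ?c x) - int x" for x
  have per: "H (x + Suc n) = H x - 1" for x unfolding H_def using GG_per[OF assms, of x] by simp
  have eq: "PFv n (?c \<circ> (ls n ^^ a)) \<longleftrightarrow> (\<forall>i\<in>{1..n}. H a \<le> H (a + i))" for a
  proof -
    have "(i \<le> (\<Sum>j<i. (?c \<circ> (ls n ^^ a)) (Suc j))) \<longleftrightarrow> H a \<le> H (a + i)" if "i \<in> {1..n}" for i
    proof -
      have "(\<Sum>j<i. (?c \<circ> (ls n ^^ a)) (Suc j)) = (\<Sum>j<i. cc n ?c (a + j))"
        using sum_rot[of i n] that by simp
      then show ?thesis unfolding H_def GG_add by (simp del: of_nat_sum)
    qed
    then show ?thesis unfolding PFv_def by blast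
  qed
  show ?thesis unfolding eq using cycle_abstract[of H n] per by blast
qed

definition spc :: "nat \<Rightarrow> (nat \<Rightarrow> nat) \<Rightarrow> nat list" where
  "spc n c = map (\<lambda>i. card {v\<in>{1..n+1}. c v = i}) [0..<n+1]"

lemma species_spc: "species n g = spc n (cnt n g)"
  unfolding species_def spc_def mu_def cnt_def by simp

lemma ls_bij: "bij_betw (ls n) {1..Suc n} {1..Suc n}"
proof (rule bij_betw_byWitness[where f' = "\<lambda>w. if w = 1 then Suc n else w - 1"])
  show "\<forall>a\<in>{1..Suc n}. (if ls n a = 1 then Suc n else ls n a - 1) = a"
    unfolding ls_formula by auto
  show "\<forall>a\<in>{1..Suc n}. ls n (if a = 1 then Suc n else a - 1) = a"
    unfolding ls_formula by auto
  show "ls n ` {1..Suc n} \<subseteq> {1..Suc n}" unfolding ls_formula by auto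
  show "(\<lambda>w. if w = 1 then Suc n else w - 1) ` {1..Suc n} \<subseteq> {1..Suc n}" by auto
qed

lemma spc_inv: assumes "bij_betw \<sigma> {1..Suc n} {1..Suc n}" shows "spc n (c \<circ> \<sigma>) = spc n c"
proof -
  let ?S = "{1..Suc n}"
  have "card {v\<in>?S. c (\<sigma> v) = i} = card {v\<in>?S. c v = i}" for i
  proof -
    have img: "\<sigma> ` {v\<in>?S. c (\<sigma> v) = i} = {v\<in>?S. c v = i}"
    proof
      show "\<sigma> ` {v\<in>?S. c (\<sigma> v) = i} \<subseteq> {v\<in>?S. c v = i}"
        using assms by (auto simp: bij_betw_def)
      show "{v\<in>?S. c v = i} \<subseteq> \<sigma> ` {v\<in>?S. c (\<sigma> v) = i}"
      proof
        fix w assume w: "w \<in> {v\<in>?S. c v = i}"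
        then have "w \<in> \<sigma> ` ?S" using assms by (simp add: bij_betw_def)
        then obtain v where v: "v \<in> ?S" "w = \<sigma> v" by blast
        then show "w \<in> \<sigma> ` {v\<in>?S. c (\<sigma> v) = i}" using w by blast
      qed
    qed
    have "inj_on \<sigma> {v\<in>?S. c (\<sigma> v) = i}"
      using assms by (auto simp: bij_betw_def intro: inj_on_subset)
    then have "card (\<sigma> ` {v\<in>?S. c (\<sigma> v) = i}) = card {v\<in>?S. c (\<sigma> v) = i}" by (rule card_image)
    then show ?thesis using img by simp
  qed
  then show ?thesis unfolding spc_def by simp
qed

lemma spc_ls: "spc n (c \<circ> (ls n ^^ a)) = spc n c"
  by (rule spc_inv[OF bij_betw_funpow[OF ls_bij]])

lemma ls_mod: "ls n ^^ k = ls n ^^ (k mod Suc n)"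
proof
  fix w
  show "(ls n ^^ k) w = (ls n ^^ (k mod Suc n)) w"
  proof (cases "1 \<le> w \<and> w \<le> Suc n")
    case True
    have e: "(w - 1 + k) mod Suc n = (w - 1 + k mod Suc n) mod Suc n" by (simp add: mod_add_right_eq)
    have "(ls n ^^ k) w = ((w - 1 + k) mod Suc n) + 1" unfolding ls_pow using True by (rule if_P)
    moreover have "(ls n ^^ (k mod Suc n)) w = ((w - 1 + k mod Suc n) mod Suc n) + 1"
      unfolding ls_pow using True by (rule if_P)
    ultimately show ?thesis using e by simp
  next
    case False
    have "(ls n ^^ k) w = w" unfolding ls_pow using False by (rule if_not_P)
    moreover have "(ls n ^^ (k mod Suc n)) w = w" unfolding ls_pow using False by (rule if_not_P)
    ultimately show ?thesis by simp
  qed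
qed

lemma comp_ls: "c \<circ> (ls n ^^ a) \<circ> (ls n ^^ b) = c \<circ> (ls n ^^ (a + b))"
  by (simp add: funpow_add comp_assoc)

lemma fin_Ft: "finite (Ftilde n)" unfolding Ftilde_def by (rule finite_PiE) auto

lemma C_closed: assumes "c \<in> cnt n ` Ftilde n" shows "c \<circ> (ls n ^^ a) \<in> cnt n ` Ftilde n"
proof -
  have k: "Kc n (\<lambda>_. True) (c \<circ> (ls n ^^ a)) = Kc n (\<lambda>_. True) c" by (rule Kc_ls)
  have "{g\<in>Ftilde n. cnt n g = c \<and> True} \<noteq> {}" using assms by auto
  then have "Kc n (\<lambda>_. True) c > 0" unfolding Kc_def using fin_Ft by (simp add: card_gt_0_iff)
  then have "card {g\<in>Ftilde n. cnt n g = c \<circ> (ls n ^^ a) \<and> True} > 0" using k unfolding Kc_def by simp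
  then have "{g\<in>Ftilde n. cnt n g = c \<circ> (ls n ^^ a) \<and> True} \<noteq> {}" by (metis card.empty less_irrefl)
  then obtain g where "g \<in> Ftilde n" "cnt n g = c \<circ> (ls n ^^ a)" by blast
  then show ?thesis by (metis image_eqI)
qed

lemma Theta_bij:
  "bij_betw (\<lambda>(c,a). c \<circ> (ls n ^^ a)) ({c\<in>cnt n ` Ftilde n. PFv n c} \<times> {..n}) (cnt n ` Ftilde n)"
proof -
  let ?C = "cnt n ` Ftilde n"
  let ?Cp = "{c\<in>?C. PFv n c}"
  have uni: "a = b" if dC: "d \<in> ?C" and hh: "a \<le> n" "PFv n (d \<circ> (ls n ^^ a))" "b \<le> n" "PFv n (d \<circ> (ls n ^^ b))" for d a b
  proof -
    obtain g where g: "g \<in> Ftilde n" "d = cnt n g" using dC by blast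
    show ?thesis using cycle_cnt[OF g(1)] hh g(2) by blast
  qed
  have bk: "c \<circ> (ls n ^^ a) \<circ> (ls n ^^ ((Suc n - a) mod Suc n)) = c" if "a \<le> n" for c a
  proof -
    have "(a + (Suc n - a) mod Suc n) mod Suc n = 0"
      using that by (simp add: mod_add_right_eq)
    then have "ls n ^^ (a + (Suc n - a) mod Suc n) = id" using ls_mod[where n=n and k="a + (Suc n - a) mod Suc n"] by simp
    then show ?thesis unfolding comp_ls by simp
  qed
  show ?thesis
  proof (rule bij_betwI')
    fix x y assume x: "x \<in> ?Cp \<times> {..n}" and y: "y \<in> ?Cp \<times> {..n}"
    obtain c a where xa: "x = (c,a)" by force
    obtain c' b where yb: "y = (c',b)" by force
    have h: "c \<in> ?C" "PFv n c" "a \<le> n" "c' \<in> ?C" "PFv n c'" "b \<le> n" using x y xa yb by auto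
    show "((\<lambda>(c,a). c \<circ> (ls n ^^ a)) x = (\<lambda>(c,a). c \<circ> (ls n ^^ a)) y) = (x = y)"
    proof
      assume "(\<lambda>(c,a). c \<circ> (ls n ^^ a)) x = (\<lambda>(c,a). c \<circ> (ls n ^^ a)) y"
      then have e: "c \<circ> (ls n ^^ a) = c' \<circ> (ls n ^^ b)" using xa yb by simp
      let ?k = "(Suc n - a) mod Suc n"
      have "c = c' \<circ> (ls n ^^ b) \<circ> (ls n ^^ ?k)" using bk[OF h(3), of c] e by simp
      also have "\<dots> = c' \<circ> (ls n ^^ ((b + ?k) mod Suc n))"
      proof -
        have "ls n ^^ (b + ?k) = ls n ^^ ((b + ?k) mod Suc n)" by (rule ls_mod)
        then show ?thesis by (simp only: comp_ls)
      qed
      finally have cc': "c = c' \<circ> (ls n ^^ ((b + ?k) mod Suc n))" .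
      have "PFv n (c' \<circ> (ls n ^^ 0))" using h(5) by simp
      then have z: "(b + ?k) mod Suc n = 0" using uni[OF h(4) _ _ _ , of "(b + ?k) mod Suc n" 0] cc' h(2) by simp
      have "a = b"
      proof (cases "a = 0")
        case True
        then show ?thesis using z h(6) by simp
      next
        case False
        then have "?k = Suc n - a" using h(3) by simp
        then have m0: "(b + (Suc n - a)) mod Suc n = 0" using z by simp
        then have "Suc n dvd (b + (Suc n - a))" by (simp add: dvd_eq_mod_eq_0)
        then obtain q where q: "b + (Suc n - a) = Suc n * q" by (elim dvdE)
        have "q = 1"
        proof -
          have "q \<noteq> 0"
          proof
            assume "q = 0"
            then have "b + (Suc n - a) = 0" using q by simp
            then show False using h(3) by linarith
          qed
          moreover have "q < 2"
          proof (rule ccontr)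
            assume "\<not> q < 2"
            then have "2 \<le> q" by simp
            then have "Suc n * q \<ge> Suc n * 2" by (rule mult_le_mono2)
            moreover have "b + (Suc n - a) < Suc n * 2" using h(3,6) by simp
            ultimately show False using q by (metis leD)
          qed
          ultimately show ?thesis by linarith
        qed
        then have "b + (Suc n - a) = Suc n" using q by simp
        then show ?thesis using h(3,6) by linarith
      qed
      then have "c = c'" using cc' z by simp
      then show "x = y" using xa yb \<open>a = b\<close> by simp
    qed simp
  next
    fix x assume x: "x \<in> ?Cp \<times> {..n}"
    then obtain c a where xa: "x = (c,a)" "c \<in> ?C" "a \<le> n" by force
    then show "(\<lambda>(c,a). c \<circ> (ls n ^^ a)) x \<in> ?C" using C_closed by simp
  next
    fix d assume d: "d \<in> ?C"
    then obtain g where g: "g \<in> Ftilde n" "d = cnt n g" by blast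
    then obtain a where a: "a \<le> n" "PFv n (d \<circ> (ls n ^^ a))" using cycle_cnt[OF g(1)] by blast
    let ?c = "d \<circ> (ls n ^^ a)"
    have "?c \<in> ?Cp" using C_closed[OF d] a by simp
    moreover have "(Suc n - a) mod Suc n \<in> {..n}" by simp
    moreover have "d = ?c \<circ> (ls n ^^ ((Suc n - a) mod Suc n))" by (rule sym[OF bk[OF a(1)]])
    ultimately show "\<exists>x\<in>?Cp \<times> {..n}. d = (\<lambda>(c,a). c \<circ> (ls n ^^ a)) x" by force
  qed
qed

lemma main_count:
  fixes R :: "nat list \<Rightarrow> nat \<Rightarrow> bool"
  shows "card {g\<in>Ftilde n. R (species n g) (inversions n g)}
       = Suc n * card {g\<in>PF n. R (species n g) (inversions n g)}"
proof -
  let ?C = "cnt n ` Ftilde n"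
  let ?Cp = "{c\<in>?C. PFv n c}"
  define f where "f c = Kc n (R (spc n c)) c" for c
  have finC: "finite ?C" using fin_Ft by simp
  have finCp: "finite ?Cp" using finC by simp
  have A: "card {g\<in>Ftilde n. R (species n g) (inversions n g)} = (\<Sum>c\<in>?C. f c)"
  proof -
    let ?S = "{g\<in>Ftilde n. R (species n g) (inversions n g)}"
    have finS: "finite ?S" using fin_Ft by simp
    have "(\<Sum>c\<in>?C. \<Sum>x\<in>{x\<in>?S. cnt n x = c}. (1::nat)) = (\<Sum>x\<in>?S. 1)"
      by (rule sum.group[OF finS finC]) auto
    moreover have "{x\<in>?S. cnt n x = c} = {g\<in>Ftilde n. cnt n g = c \<and> R (spc n c) (inversions n g)}" for c
      using species_spc by auto
    ultimately show ?thesis by (simp add: f_def Kc_def)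
  qed
  have B: "card {g\<in>PF n. R (species n g) (inversions n g)} = (\<Sum>c\<in>?Cp. f c)"
  proof -
    let ?S = "{g\<in>PF n. R (species n g) (inversions n g)}"
    have finS: "finite ?S" using fin_Ft unfolding PF_char by simp
    have "(\<Sum>c\<in>?Cp. \<Sum>x\<in>{x\<in>?S. cnt n x = c}. (1::nat)) = (\<Sum>x\<in>?S. 1)"
      by (rule sum.group[OF finS finCp]) (auto simp: PF_char)
    moreover have "{x\<in>?S. cnt n x = c} = {g\<in>Ftilde n. cnt n g = c \<and> R (spc n c) (inversions n g)}"
      if "c \<in> ?Cp" for c
      using species_spc that unfolding PF_char by auto
    ultimately show ?thesis by (simp add: f_def Kc_def)
  qed
  have inv: "f (c \<circ> (ls n ^^ a)) = f c" for c a
    unfolding f_def spc_ls by (rule Kc_ls)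
  have "(\<Sum>c\<in>?C. f c) = (\<Sum>x\<in>?Cp \<times> {..n}. f ((\<lambda>(c,a). c \<circ> (ls n ^^ a)) x))"
    using sum.reindex_bij_betw[OF Theta_bij, of f] by simp
  also have "\<dots> = (\<Sum>x\<in>?Cp \<times> {..n}. (\<lambda>(c,a). f c) x)"
    by (rule sum.cong) (auto simp: inv)
  also have "\<dots> = (\<Sum>c\<in>?Cp. \<Sum>a\<in>{..n}. f c)"
    by (rule sum.cartesian_product[symmetric])
  also have "\<dots> = Suc n * (\<Sum>c\<in>?Cp. f c)"
    by (simp add: sum_distrib_left)
  finally show ?thesis using A B by simp
qed

lemma Ft_ne: "Ftilde n \<noteq> {}"
proof -
  have "(\<lambda>t. if t \<in> {1..n} then 1 else undefined) \<in> Ftilde n" unfolding Ftilde_def by auto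
  then show ?thesis by blast
qed

lemma PF_sub: "PF n \<subseteq> Ftilde n" unfolding PF_char by auto

lemma PF_ne: "PF n \<noteq> {}"
proof
  assume e: "PF n = {}"
  have "card {g\<in>Ftilde n. True} = Suc n * card {g\<in>PF n. True}"
    using main_count[where R="\<lambda>_ _. True" and n=n] by simp
  then have "card (Ftilde n) = 0" using e by simp
  then show False using Ft_ne fin_Ft by simp
qed

lemma map_eq:
  fixes \<phi> :: "nat list \<Rightarrow> nat \<Rightarrow> 'b"
  shows "map_pmf (\<lambda>g. \<phi> (species n g) (inversions n g)) (pmf_of_set (PF n))
       = map_pmf (\<lambda>g. \<phi> (species n g) (inversions n g)) (pmf_of_set (Ftilde n))"
proof (rule pmf_eqI)
  fix x
  let ?h = "\<lambda>g. \<phi> (species n g) (inversions n g)"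
  have finP: "finite (PF n)" using fin_Ft PF_sub by (rule finite_subset[rotated])
  have e1: "PF n \<inter> ?h -` {x} = {g\<in>PF n. \<phi> (species n g) (inversions n g) = x}" by auto
  have e2: "Ftilde n \<inter> ?h -` {x} = {g\<in>Ftilde n. \<phi> (species n g) (inversions n g) = x}" by auto
  have c1: "card {g\<in>Ftilde n. \<phi> (species n g) (inversions n g) = x}
      = Suc n * card {g\<in>PF n. \<phi> (species n g) (inversions n g) = x}"
    by (rule main_count)
  have c2: "card (Ftilde n) = Suc n * card (PF n)"
    using main_count[where R="\<lambda>_ _. True" and n=n] by simp
  have "pmf (map_pmf ?h (pmf_of_set (PF n))) x = card (PF n \<inter> ?h -` {x}) / card (PF n)"
    unfolding pmf_map using measure_pmf_of_set[OF PF_ne finP] by simp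
  also have "\<dots> = card (Ftilde n \<inter> ?h -` {x}) / card (Ftilde n)"
    unfolding e1 e2 c1 c2 of_nat_mult by (subst mult_divide_mult_cancel_left) simp_all
  also have "\<dots> = pmf (map_pmf ?h (pmf_of_set (Ftilde n))) x"
    unfolding pmf_map using measure_pmf_of_set[OF Ft_ne fin_Ft] by simp
  finally show "pmf (map_pmf ?h (pmf_of_set (PF n))) x = pmf (map_pmf ?h (pmf_of_set (Ftilde n))) x" .
qed

theorem mainTheorem16:
  fixes n :: nat
  shows "map_pmf (species n) (pmf_of_set (PF n)) = map_pmf (species n) (pmf_of_set (Ftilde n))
     \<and> map_pmf (inversions n) (pmf_of_set (PF n)) = map_pmf (inversions n) (pmf_of_set (Ftilde n))"
proof
  show "map_pmf (species n) (pmf_of_set (PF n)) = map_pmf (species n) (pmf_of_set (Ftilde n))"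
    using map_eq[where \<phi>="\<lambda>s k. s" and n=n] by simp
  show "map_pmf (inversions n) (pmf_of_set (PF n)) = map_pmf (inversions n) (pmf_of_set (Ftilde n))"
    using map_eq[where \<phi>="\<lambda>s k. k" and n=n] by simp
qed

end
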